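(* Let $i,p\ge-1$ and $q\ge0$, and let $v\in C([0,1],L(\mathbb{R}^d,\mathbb{R}^n))$, $w\in C([0,1],\mathbb{R}^d)$. Then \[ \Big\|\Delta_i\Big(\int_0^\cdot\Delta_pv(s)\,d\Delta_qw(s)\Big)\Big\|_\infty\lesssim 2^{-(i\vee p\vee q)-i+p+q}\|\Delta_pv\|_\infty\|\Delta_qw\|_\infty, \] except in the case $i=q>p$, where one only has \[ \Big\|\Delta_i\Big(\int_0^\cdot\Delta_pv(s)\,d\Delta_qw(s)\Big)\Big\|_\infty\lesssim\|\Delta_pv\|_\infty\|\Delta_qw\|_\infty. \]
   Context: Index set: pairs $(p,m)$ with either $p=-1,m=0$, or $p\in\mathbb{N}=\{0,1,2,\dots\}$ and $0\le m\le 2^p$. For $p\in\mathbb{N}$, $1\le m\le 2^p$ set $t^0_{pm}=(m-1)2^{-p}$, $t^1_{pm}=(2m-1)2^{-p-1}$, $t^2_{pm}=m2^{-p}$. Rescaled Haar functions: for $p\in\mathbb{N}$, $1\le m\le 2^p$, $\chi_{pm}=2^p$ on $[t^0_{pm},t^1_{pm})$, $=-2^p$ on $[t^1_{pm},t^2_{pm})$, $=0$ elsewhere; $\chi_{00}\equiv1$; $\chi_{p0}\equiv0$ for $p\ge1$. Rescaled Schauder functions: $\varphi_{pm}(t)=\int_0^t\chi_{pm}(s)\,ds$ for $p\in\mathbb{N}$, and $\varphi_{-10}\equiv1$. For continuous $f:[0,1]\to E$ ($E$ a finite-dimensional normed space), coefficients: $f_{-10}=f(0)$, $f_{00}=f(1)-f(0)$,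 $f_{p0}=0$ for $p\ge1$, $f_{pm}=2f(t^1_{pm})-f(t^0_{pm})-f(t^2_{pm})$ for $p\in\mathbb{N},m\ge1$. Schauder blocks: $\Delta_pf=\sum_{m=0}^{2^p}f_{pm}\varphi_{pm}$ for $p\ge-1$. Since $\Delta_qw$ is piecewise linear, $\int_0^t\Delta_pv\,d\Delta_qw:=\int_0^t\Delta_pv(s)(\Delta_qw)'(s)\,ds$. $\|\cdot\|_\infty$ is the sup norm on $[0,1]$; $a\vee b=\max(a,b)$; $\lesssim$ hides a constant independent of $i,p,q,v,w$. *)

theory Defs
  imports "HOL-Analysis.Analysis"
begin

text \<open>Dyadic points t^0_{pm}, t^1_{pm}, t^2_{pm} (for p in nat, 1 <= m <= 2^p).\<close>
definition tL :: "nat \<Rightarrow> nat \<Rightarrow> real" where "tL p m = (real m - 1) / 2 ^ p"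
definition tM :: "nat \<Rightarrow> nat \<Rightarrow> real" where "tM p m = (2 * real m - 1) / 2 ^ (p + 1)"
definition tR :: "nat \<Rightarrow> nat \<Rightarrow> real" where "tR p m = real m / 2 ^ p"

text \<open>Rescaled Haar functions chi_{pm}, p in nat, 0 <= m <= 2^p.\<close>
definition haar :: "nat \<Rightarrow> nat \<Rightarrow> real \<Rightarrow> real" where
  "haar p m t =
     (if m = 0 then (if p = 0 then 1 else 0)
      else if tL p m \<le> t \<and> t < tM p m then 2 ^ p
      else if tM p m \<le> t \<and> t < tR p m then - (2 ^ p)
      else 0)"

definition schauder :: "nat \<Rightarrow> nat \<Rightarrow> real \<Rightarrow> real" where
  "schauder p m t = integral {0..t} (haar p m)"

text \<open>Schauder coefficients f_{pm} for p in nat (the coefficient f_{-1,0} = f 0 is used directly).\<close>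
definition scoeff :: "(real \<Rightarrow> 'e::real_normed_vector) \<Rightarrow> nat \<Rightarrow> nat \<Rightarrow> 'e" where
  "scoeff f p m =
     (if m = 0 then (if p = 0 then f 1 - f 0 else 0)
      else 2 *\<^sub>R f (tM p m) - f (tL p m) - f (tR p m))"

text \<open>Schauder blocks Delta_p f for p >= -1 (p :: int); phi_{-1,0} = 1, f_{-1,0} = f 0.
  For p < -1 (not used) it is defined as 0.\<close>
definition sblock :: "int \<Rightarrow> (real \<Rightarrow> 'e::real_normed_vector) \<Rightarrow> real \<Rightarrow> 'e" where
  "sblock p f t =
     (if p = -1 then f 0
      else if p \<ge> 0 then (\<Sum>m\<in>{0..2 ^ nat p}. schauder (nat p) m t *\<^sub>R scoeff f (nat p) m)
      else 0)"

definition supnorm :: "(real \<Rightarrow> 'e::real_normed_vector) \<Rightarrow> real" where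
  "supnorm f = (SUP t\<in>{0..1}. norm (f t))"

definition block_integral ::
  "int \<Rightarrow> (real \<Rightarrow> ('a::real_normed_vector \<Rightarrow>\<^sub>L 'b::real_normed_vector)) \<Rightarrow> int \<Rightarrow> (real \<Rightarrow> 'a) \<Rightarrow> real \<Rightarrow> 'b" where
  "block_integral p v q w t =
     integral {0..t} (\<lambda>s. blinfun_apply (sblock p v s) (vector_derivative (sblock q w) (at s)))"

end

theory Submission
  imports Defs
begin


lemma tL_alt: "tL p m = (2*real m - 2) / 2^(p+1)"
  by (simp add: tL_def divide_simps)
lemma tR_alt: "tR p m = (2*real m) / 2^(p+1)"
  by (simp add: tR_def divide_simps)
lemma tLM: "tL p m < tM p m"
  by (simp add: tL_def tM_def divide_simps)
lemma tMR: "tM p m < tR p m"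
  by (simp add: tR_def tM_def divide_simps)
lemma tM_mid: "tM p m - tL p m = 1/2^(p+1)" "tR p m - tM p m = 1/2^(p+1)"
  by (simp_all add: tL_def tM_def tR_def divide_simps)
lemma tL_nonneg: "m \<ge> 1 \<Longrightarrow> 0 \<le> tL p m"
  by (simp add: tL_def)

lemma haar_pos: "m \<ge> 1 \<Longrightarrow> haar p m s =
   (if s \<in> {tL p m..<tM p m} then 2^p else 0) + (if s \<in> {tM p m..<tR p m} then -(2^p) else 0)"
  using tLM[of p m] tMR[of p m] by (auto simp: haar_def)

lemma int_ind:
  fixes a b t c :: real
  assumes "0 \<le> a"
  shows "((\<lambda>s. if s \<in> {a..<b} then c else 0) has_integral (max 0 (min b t - a) * c)) {0..t}"
proof -
  have 1: "((\<lambda>s. if s \<in> {a..b} then c else 0) has_integral (max 0 (min b t - a) * c)) {0..t}"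
  proof -
    have e: "{a..b} \<inter> {0..t} = {a..min b t}" using assms by auto
    have "((\<lambda>s. c) has_integral (measure lborel {a..min b t} *\<^sub>R c)) {a..min b t}"
      using has_integral_const_real by blast
    moreover have "measure lborel {a..min b t} *\<^sub>R c = max 0 (min b t - a) * c"
      by auto
    ultimately have "((\<lambda>s. c) has_integral (max 0 (min b t - a) * c)) ({a..b} \<inter> {0..t})"
      by (simp only: e)
    then show ?thesis by (simp only: has_integral_restrict_Int)
  qed
  show ?thesis
    by (rule has_integral_spike_finite[OF _ _ 1, of "{b}"]) auto
qed

lemma haar_has_integral:
  assumes "m \<ge> 1"
  shows "(haar p m has_integral
     2^p * (max 0 (min (tM p m) t - tL p m) - max 0 (min (tR p m) t - tM p m))) {0..t}"
proof -
  have a: "0 \<le> tL p m" "0 \<le> tM p m" using tL_nonneg[OF assms, of p] tLM[of p m] by auto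
  define A where "A = max 0 (min (tM p m) t - tL p m)"
  define B where "B = max 0 (min (tR p m) t - tM p m)"
  have hf: "haar p m = (\<lambda>s. (if s \<in> {tL p m..<tM p m} then 2^p else 0) + (if s \<in> {tM p m..<tR p m} then -(2^p) else 0))"
    using haar_pos[OF assms] by (intro ext)
  have "((\<lambda>s. (if s \<in> {tL p m..<tM p m} then 2^p else 0) + (if s \<in> {tM p m..<tR p m} then -(2^p) else 0))
     has_integral (A * 2^p + B * (-(2^p)))) {0..t}"
    unfolding A_def B_def by (intro has_integral_add int_ind a)
  moreover have "A * 2^p + B * (-(2^p)) = 2^p * (A - B)" by (simp add: algebra_simps)
  ultimately show ?thesis unfolding A_def B_def hf by simp
qed

lemma haar0_has_integral:
  "(haar p 0 has_integral (if p = 0 then max 0 t else 0)) {0..t}"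
proof (cases "p = 0")
  case True
  have "((\<lambda>s. 1::real) has_integral (measure lborel {0..t} *\<^sub>R 1)) {0..t}"
    using has_integral_const_real by blast
  moreover have "haar p 0 = (\<lambda>s. 1)" using True by (auto simp: haar_def)
  ultimately show ?thesis using True by (auto simp: max_def)
next
  case False
  then have "haar p 0 = (\<lambda>s. 0)" by (auto simp: haar_def)
  then show ?thesis using False by (simp add: has_integral_0)
qed

lemma haar_integrable: "haar p m integrable_on {0..t}"
proof (cases "m = 0")
  case True then show ?thesis using haar0_has_integral by blast
next
  case False then show ?thesis using haar_has_integral[of m p t] by auto
qed

lemma schauder_pos: "m \<ge> 1 \<Longrightarrow> schauder p m t =
     2^p * (max 0 (min (tM p m) t - tL p m) - max 0 (min (tR p m) t - tM p m))"
  unfolding schauder_def by (rule integral_unique[OF haar_has_integral])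

lemma schauder_0: "schauder p 0 t = (if p = 0 then max 0 t else 0)"
  unfolding schauder_def by (rule integral_unique[OF haar0_has_integral])

lemma schauder_out: "m \<ge> 1 \<Longrightarrow> t \<le> tL p m \<or> tR p m \<le> t \<Longrightarrow> schauder p m t = 0"
  using tLM[of p m] tMR[of p m] tM_mid[of p m]
  by (auto simp: schauder_pos max_def min_def)

lemma schauder_bound: "m \<ge> 1 \<Longrightarrow> \<bar>schauder p m t\<bar> \<le> 1/2"
proof -
  assume m: "m \<ge> 1"
  have h: "(2::real)^p * (1/2^(p+1)) = 1/2" by simp
  have "0 \<le> max 0 (min (tM p m) t - tL p m) - max 0 (min (tR p m) t - tM p m)"
    "max 0 (min (tM p m) t - tL p m) - max 0 (min (tR p m) t - tM p m) \<le> 1/2^(p+1)"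
    using tLM[of p m] tMR[of p m] tM_mid[of p m] by (auto simp: max_def min_def)
  then have "2^p * (max 0 (min (tM p m) t - tL p m) - max 0 (min (tR p m) t - tM p m)) \<le> 2^p * (1/2^(p+1))"
    "0 \<le> 2^p * (max 0 (min (tM p m) t - tL p m) - max 0 (min (tR p m) t - tM p m))"
    by (intro mult_left_mono mult_nonneg_nonneg; simp)+
  then show ?thesis using h schauder_pos[OF m, of p t] by (auto simp: abs_le_iff)
qed

lemma schauder_mid: "m \<ge> 1 \<Longrightarrow> schauder p m (tM p m) = 1/2"
  using tLM[of p m] tMR[of p m] tM_mid[of p m]
  by (simp add: schauder_pos max_def)

lemma haar_out: "m \<ge> 1 \<Longrightarrow> s < tL p m \<or> tR p m \<le> s \<Longrightarrow> haar p m s = 0"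
  using tLM[of p m] tMR[of p m] by (auto simp: haar_def)

lemma haar_abs: "\<bar>haar p m s\<bar> \<le> 2^p"
  by (auto simp: haar_def)



lemma tent_single:
  fixes t :: real
  assumes "1 \<le> m" "m \<noteq> nat \<lfloor>t * 2^P\<rfloor> + 1"
  shows "t < tL P m \<or> tR P m \<le> t"
proof (cases "t < 0")
  case True
  then show ?thesis using tL_nonneg[OF assms(1), of P] by auto
next
  case False
  define k where "k = \<lfloor>t * 2^P\<rfloor>"
  have k0: "0 \<le> k" using False by (simp add: k_def)
  have kl: "real_of_int k \<le> t * 2^P" "t * 2^P < real_of_int k + 1" unfolding k_def by linarith+
  have "int m \<noteq> k + 1"
  proof
    assume "int m = k + 1"
    then have "m = nat k + 1" using k0 by arith
    then show False using assms(2) unfolding k_def by simp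
  qed
  then have "int m \<le> k \<or> int m \<ge> k + 2" by linarith
  then show ?thesis
  proof
    assume "int m \<le> k"
    then have "real m \<le> real_of_int k" by linarith
    then have "real m \<le> t * 2^P" using kl by linarith
    then have "tR P m \<le> t" by (simp add: tR_def divide_simps)
    then show ?thesis ..
  next
    assume "int m \<ge> k + 2"
    then have "real m \<ge> real_of_int k + 2" by linarith
    then have "t * 2^P < real m - 1" using kl by linarith
    then have "t < tL P m" by (simp add: tL_def divide_simps)
    then show ?thesis ..
  qed
qed

lemma sum_single:
  assumes "finite A" "0 \<in> A" "m0 \<noteq> 0" "\<And>m. m \<in> A \<Longrightarrow> m \<noteq> 0 \<Longrightarrow> m \<noteq> m0 \<Longrightarrow> f m = 0"
  shows "sum f A = f 0 + (if m0 \<in> A then f m0 else 0)"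
proof -
  have "sum f A = f 0 + sum f (A - {0})" using assms by (simp add: sum.remove)
  also have "sum f (A - {0}) = (if m0 \<in> A then f m0 else 0)"
  proof (cases "m0 \<in> A")
    case True
    then have "sum f (A - {0}) = f m0 + sum f (A - {0} - {m0})" using assms
      by (subst sum.remove[of _ m0]) auto
    moreover have "sum f (A - {0} - {m0}) = 0" using assms by (intro sum.neutral) auto
    ultimately show ?thesis using True by simp
  next
    case False
    then have "sum f (A - {0}) = 0" using assms by (intro sum.neutral) auto
    then show ?thesis using False by simp
  qed
  finally show ?thesis .
qed

definition HF :: "nat \<Rightarrow> (real \<Rightarrow> 'e::real_normed_vector) \<Rightarrow> real \<Rightarrow> 'e" where
  "HF P f s = (\<Sum>m\<in>{0..2^P}. haar P m s *\<^sub>R scoeff f P m)"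

lemma sblock_nat: "sblock (int P) f t = (\<Sum>m\<in>{0..2^P}. schauder P m t *\<^sub>R scoeff f P m)"
  by (simp add: sblock_def)

lemma sblock_has_integral:
  fixes f :: "real \<Rightarrow> 'e::banach"
  shows "(HF P f has_integral sblock (int P) f t) {0..t}"
  unfolding HF_def sblock_nat schauder_def
  by (intro has_integral_sum has_integral_scaleR_left integrable_integral haar_integrable) auto

lemma HF_integrable:
  fixes f :: "real \<Rightarrow> 'e::banach"
  shows "HF P f integrable_on {0..t}"
  using sblock_has_integral by blast

lemma sblock_at0: "sblock (int P) f 0 = 0"
proof -
  have "schauder P m 0 = 0" for m
  proof (cases "m = 0")
    case True then show ?thesis by (simp add: schauder_0)
  next
    case False then show ?thesis using tL_nonneg[of m P] by (intro schauder_out) auto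
  qed
  then show ?thesis by (simp add: sblock_nat)
qed

lemma scoeff_0: "P \<ge> 1 \<Longrightarrow> scoeff f P 0 = 0"
  by (simp add: scoeff_def)

lemma sblock_mid:
  assumes "P \<ge> 1" "1 \<le> k" "k \<le> 2^P"
  shows "sblock (int P) f (tM P k) = (1/2) *\<^sub>R scoeff f P k"
proof -
  have z: "schauder P m (tM P k) = 0" if "m \<in> {0..2^P}" "m \<noteq> 0" "m \<noteq> k" for m
  proof -
    have "tM P k \<le> tL P m \<or> tR P m \<le> tM P k"
    proof (cases "m < k")
      case True
      then have "real m \<le> real k - 1" by linarith
      then have "tR P m \<le> tL P k" by (simp add: tR_def tL_def divide_simps)
      then show ?thesis using tLM[of P k] by auto
    next
      case False
      then have "real m \<ge> real k + 1" using that by linarith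
      then have "tR P k \<le> tL P m" by (simp add: tR_def tL_def divide_simps)
      then show ?thesis using tMR[of P k] by auto
    qed
    then show ?thesis using that by (intro schauder_out) auto
  qed
  have "sblock (int P) f (tM P k) = schauder P 0 (tM P k) *\<^sub>R scoeff f P 0 +
      (if k \<in> {0..2^P} then schauder P k (tM P k) *\<^sub>R scoeff f P k else 0)"
    unfolding sblock_nat using assms z by (intro sum_single) auto
  then show ?thesis using assms by (simp add: schauder_mid scoeff_0)
qed

lemma sum01: "(\<Sum>m\<in>{0..(1::nat)}. g m) = g 0 + g 1"
proof -
  have "{0..(1::nat)} = {0,1}" by auto
  then show ?thesis by simp
qed

lemma sblock0_eq: "sblock 0 f t = schauder 0 0 t *\<^sub>R scoeff f 0 0 + schauder 0 1 t *\<^sub>R scoeff f 0 1"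
  using sblock_nat[of 0 f t] by (simp add: sum01)

lemma tvals0: "tL 0 1 = 0" "tM 0 1 = 1/2" "tR 0 1 = 1"
  by (simp_all add: tL_def tM_def tR_def)

lemma tvals0': "tL 0 (Suc 0) = 0" "tM 0 (Suc 0) = 1/2" "tR 0 (Suc 0) = 1"
  by (simp_all add: tL_def tM_def tR_def)

lemma sblock0_1: "sblock 0 f 1 = scoeff f 0 0"
proof -
  have s: "schauder 0 (Suc 0) 1 = 0" by (rule schauder_out) (auto simp: tvals0 tvals0')
  show ?thesis by (simp add: sblock0_eq schauder_0 s)
qed

lemma sblock0_half: "sblock 0 f (1/2) = (1/2) *\<^sub>R scoeff f 0 0 + (1/2) *\<^sub>R scoeff f 0 1"
proof -
  have s: "schauder 0 (Suc 0) (1/2) = 1/2" using schauder_mid[of 1 0] by (simp add: tvals0 tvals0')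
  show ?thesis by (simp add: sblock0_eq schauder_0 s)
qed

lemma coeff_bound:
  assumes B: "\<And>t. t \<in> {0..1} \<Longrightarrow> norm (sblock (int P) f t) \<le> B"
  shows "m \<in> {0..2^P} \<Longrightarrow> norm (scoeff f P m) \<le> 3 * B"
    and "P \<ge> 1 \<Longrightarrow> m \<in> {1..2^P} \<Longrightarrow> norm (scoeff f P m) \<le> 2 * B"
    and "P = 0 \<Longrightarrow> norm (scoeff f 0 0) \<le> B"
proof -
  have B0: "0 \<le> B"
  proof -
    have "norm (sblock (int P) f 0) \<le> B" using B by simp
    then show "0 \<le> B" using norm_ge_zero order_trans by blast
  qed
  have c00: "norm (scoeff f 0 0) \<le> B" if P0: "P = 0" using B[of 1] sblock0_1[of f] P0 by simp
  then show "P = 0 \<Longrightarrow> norm (scoeff f 0 0) \<le> B" .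
  have c01: "norm (scoeff f 0 1) \<le> 3 * B" if P0: "P = 0"
  proof -
    have "scoeff f 0 1 = 2 *\<^sub>R sblock 0 f (1/2) - scoeff f 0 0"
      by (simp add: sblock0_half algebra_simps)
    then have "norm (scoeff f 0 1) \<le> 2 * norm (sblock 0 f (1/2)) + norm (scoeff f 0 0)"
      by (metis norm_scaleR norm_triangle_ineq4 abs_numeral)
    moreover have "norm (sblock 0 f (1/2)) \<le> B" using B[of "1/2"] P0 by simp
    ultimately show ?thesis using c00 P0 by linarith
  qed
  have cP: "norm (scoeff f P m) \<le> 2 * B" if "P \<ge> 1" "m \<in> {1..2^P}" for m
  proof -
    have "real m \<le> 2^P" using that by (metis atLeastAtMost_iff of_nat_le_iff of_nat_numeral of_nat_power)
    then have "2*real m - 1 \<le> 2*2^P" by linarith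
    moreover have "1 \<le> real m" using that by simp
    ultimately have tm: "tM P m \<in> {0..1}"
      unfolding tM_def by (auto simp: divide_simps)
    have "sblock (int P) f (tM P m) = (1/2) *\<^sub>R scoeff f P m" using that by (intro sblock_mid) auto
    then show ?thesis using B[OF tm] by simp
  qed
  then show "P \<ge> 1 \<Longrightarrow> m \<in> {1..2^P} \<Longrightarrow> norm (scoeff f P m) \<le> 2 * B" by blast
  show "m \<in> {0..2^P} \<Longrightarrow> norm (scoeff f P m) \<le> 3 * B"
  proof -
    assume m: "m \<in> {0..2^P}"
    show ?thesis
    proof (cases "P = 0")
      case True
      then have "m = 0 \<or> m = 1" using m by auto
      then show ?thesis using True c00 c01 B0 by auto
    next
      case False
      show ?thesis
      proof (cases "m = 0")
        case True then show ?thesis using False B0 by (simp add: scoeff_0)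
      next
        case False2: False
        then show ?thesis using cP[of m] False m B0 by auto
      qed
    qed
  qed
qed

lemma HF_bound:
  assumes B: "\<And>t. t \<in> {0..1} \<Longrightarrow> norm (sblock (int P) f t) \<le> B"
  shows "norm (HF P f s) \<le> 4 * 2^P * B"
proof (cases "P = 0")
  case True
  have "HF P f s = haar 0 0 s *\<^sub>R scoeff f 0 0 + haar 0 1 s *\<^sub>R scoeff f 0 1"
    using True by (simp add: HF_def sum01)
  then have "norm (HF P f s) \<le> \<bar>haar 0 0 s\<bar> * norm (scoeff f 0 0) + \<bar>haar 0 1 s\<bar> * norm (scoeff f 0 1)"
    by (metis norm_scaleR norm_triangle_ineq)
  also have "\<dots> \<le> 1 * B + 1 * (3 * B)"
    using haar_abs[of 0 0 s] haar_abs[of 0 1 s] coeff_bound(1)[OF B, of 1] coeff_bound(3)[OF B] True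
    by (intro add_mono mult_mono) auto
  finally show ?thesis using True by simp
next
  case False
  define m0 where "m0 = nat \<lfloor>s * 2^P\<rfloor> + 1"
  have "HF P f s = haar P 0 s *\<^sub>R scoeff f P 0 +
      (if m0 \<in> {0..2^P} then haar P m0 s *\<^sub>R scoeff f P m0 else 0)"
    unfolding HF_def
  proof (rule sum_single)
    fix m assume "m \<in> {0..2^P}" "m \<noteq> 0" "m \<noteq> m0"
    then show "haar P m s *\<^sub>R scoeff f P m = 0"
      using tent_single[where t=s and m=m and P=P] haar_out[where m=m and p=P and s=s] unfolding m0_def by auto
  qed (auto simp: m0_def)
  then have e: "HF P f s = (if m0 \<in> {0..2^P} then haar P m0 s *\<^sub>R scoeff f P m0 else 0)"
    using False by (simp add: scoeff_0)
  have B0: "0 \<le> B"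
  proof -
    have "norm (sblock (int P) f 0) \<le> B" using B by simp
    then show "0 \<le> B" using norm_ge_zero order_trans by blast
  qed
  show ?thesis
  proof (cases "m0 \<in> {0..2^P}")
    case True
    then have "norm (HF P f s) = \<bar>haar P m0 s\<bar> * norm (scoeff f P m0)" using e by simp
    also have "\<dots> \<le> 2^P * (2 * B)"
      using haar_abs[of P m0 s] coeff_bound(2)[OF B, of m0] True False B0
      by (intro mult_mono) (auto simp: m0_def)
    also have "\<dots> \<le> 4 * 2^P * B"
    proof -
      have "0 \<le> 2^P * B" using B0 by simp
      then show ?thesis by (simp add: algebra_simps)
    qed
    finally show ?thesis .
  next
    case False
    then show ?thesis using e B0 by simp
  qed
qed

lemma sblock_diff:
  fixes f :: "real \<Rightarrow> 'e::banach"
  assumes "0 \<le> a" "a \<le> b"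
  shows "(HF P f has_integral (sblock (int P) f b - sblock (int P) f a)) {a..b}"
proof -
  have "integral {0..a} (HF P f) + integral {a..b} (HF P f) = integral {0..b} (HF P f)"
    by (rule Henstock_Kurzweil_Integration.integral_combine) (use assms HF_integrable in auto)
  moreover have "HF P f integrable_on {a..b}"
    by (rule integrable_subinterval_real[OF HF_integrable[of P f b]]) (use assms in auto)
  ultimately show ?thesis
    using integral_unique[OF sblock_has_integral[of P f a]] integral_unique[OF sblock_has_integral[of P f b]]
    by (metis add_diff_cancel_left' integrable_integral)
qed

lemma sblock_lip:
  fixes f :: "real \<Rightarrow> 'e::banach"
  assumes B: "\<And>t. t \<in> {0..1} \<Longrightarrow> norm (sblock (int P) f t) \<le> B"
    and "0 \<le> a" "a \<le> b"
  shows "norm (sblock (int P) f b - sblock (int P) f a) \<le> 4 * 2^P * B * (b - a)"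
proof -
  have B0: "0 \<le> B"
  proof -
    have "norm (sblock (int P) f 0) \<le> B" using B by simp
    then show "0 \<le> B" using norm_ge_zero order_trans by blast
  qed
  have i: "(HF P f has_integral (sblock (int P) f b - sblock (int P) f a)) (cbox a b)"
    using sblock_diff[OF assms(2,3)] by simp
  have "norm (sblock (int P) f b - sblock (int P) f a) \<le> (4 * 2^P * B) * measure lborel (cbox a b)"
    by (rule has_integral_bound[OF _ i]) (use HF_bound[OF B] B0 in auto)
  then show ?thesis using assms by simp
qed

lemma sblock_bdd:
  fixes f :: "real \<Rightarrow> 'e::real_normed_vector"
  shows "\<exists>B. \<forall>t\<in>{0..1}. norm (sblock (int P) f t) \<le> B"
proof -
  have "norm (sblock (int P) f t) \<le> (\<Sum>m\<in>{0..2^P}. norm (scoeff f P m))" if "t \<in> {0..1}" for t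
  proof -
    have "norm (sblock (int P) f t) \<le> (\<Sum>m\<in>{0..2^P}. norm (schauder P m t *\<^sub>R scoeff f P m))"
      unfolding sblock_nat by (rule norm_sum)
    also have "\<dots> \<le> (\<Sum>m\<in>{0..2^P}. norm (scoeff f P m))"
    proof (rule sum_mono)
      fix m
      have "\<bar>schauder P m t\<bar> \<le> 1"
      proof (cases "m = 0")
        case True then show ?thesis using that by (simp add: schauder_0)
      next
        case False then show ?thesis using schauder_bound[of m P t] by simp
      qed
      then show "norm (schauder P m t *\<^sub>R scoeff f P m) \<le> norm (scoeff f P m)"
        by (simp add: mult_left_le_one_le)
    qed
    finally show ?thesis .
  qed
  then show ?thesis by blast
qed



definition hk :: "nat \<Rightarrow> nat \<Rightarrow> int \<Rightarrow> real" where
  "hk Q m k = (if m = 0 then (if Q = 0 then 1 else 0)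
     else if 2*int m - 2 \<le> k \<and> k < 2*int m - 1 then 2^Q
     else if 2*int m - 1 \<le> k \<and> k < 2*int m then -(2^Q) else 0)"

lemma frac_le_iff: "(of_int a / 2^(Q+1) \<le> (s::real)) \<longleftrightarrow> a \<le> \<lfloor>s*2^(Q+1)\<rfloor>"
proof -
  have "(of_int a / 2^(Q+1) \<le> s) \<longleftrightarrow> of_int a \<le> s*2^(Q+1)"
    by (simp add: pos_divide_le_eq)
  also have "\<dots> \<longleftrightarrow> a \<le> \<lfloor>s*2^(Q+1)\<rfloor>" by (simp add: le_floor_iff)
  finally show ?thesis .
qed

lemma t_ints: "tL Q m = of_int (2*int m - 2) / 2^(Q+1)" "tM Q m = of_int (2*int m - 1) / 2^(Q+1)"
   "tR Q m = of_int (2*int m) / 2^(Q+1)"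
  by (simp_all add: tL_alt tR_alt tM_def)

lemma haar_floor: "haar Q m s = hk Q m \<lfloor>s*2^(Q+1)\<rfloor>"
proof (cases "m = 0")
  case True then show ?thesis by (simp add: haar_def hk_def)
next
  case False
  have e1: "(tL Q m \<le> s) \<longleftrightarrow> 2*int m - 2 \<le> \<lfloor>s*2^(Q+1)\<rfloor>"
    unfolding t_ints by (rule frac_le_iff)
  have e2: "(tM Q m \<le> s) \<longleftrightarrow> 2*int m - 1 \<le> \<lfloor>s*2^(Q+1)\<rfloor>"
    unfolding t_ints by (rule frac_le_iff)
  have e3: "(tR Q m \<le> s) \<longleftrightarrow> 2*int m \<le> \<lfloor>s*2^(Q+1)\<rfloor>"
    unfolding t_ints by (rule frac_le_iff)
  have e2': "(s < tM Q m) \<longleftrightarrow> \<not> (2*int m - 1 \<le> \<lfloor>s*2^(Q+1)\<rfloor>)" using e2 by linarith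
  have e3': "(s < tR Q m) \<longleftrightarrow> \<not> (2*int m \<le> \<lfloor>s*2^(Q+1)\<rfloor>)" using e3 by linarith
  have "haar Q m s = (if 2*int m - 2 \<le> \<lfloor>s*2^(Q+1)\<rfloor> \<and> \<not> (2*int m - 1 \<le> \<lfloor>s*2^(Q+1)\<rfloor>) then 2^Q
     else if 2*int m - 1 \<le> \<lfloor>s*2^(Q+1)\<rfloor> \<and> \<not> (2*int m \<le> \<lfloor>s*2^(Q+1)\<rfloor>) then -(2^Q) else 0)"
    unfolding haar_def using False by (simp only: e1 e2 e2' e3' if_False) 
  then show ?thesis using False unfolding hk_def by (simp add: not_le)
qed

lemma HF_cell: "\<lfloor>s*2^(Q+1)\<rfloor> = \<lfloor>s'*2^(Q+1)\<rfloor> \<Longrightarrow> HF Q f s = HF Q f s'"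
  by (simp add: HF_def haar_floor)

lemma HF_deriv:
  fixes f :: "real \<Rightarrow> 'e::banach"
  assumes s0: "0 < s" and sn: "s * 2^(Q+1) \<notin> \<int>"
  shows "(sblock (int Q) f has_vector_derivative HF Q f s) (at s)"
proof -
  define N :: real where "N = 2^(Q+1)"
  have N0: "0 < N" by (simp add: N_def)
  define k where "k = \<lfloor>s*N\<rfloor>"
  have k1: "of_int k < s*N"
  proof -
    have "of_int k \<le> s*N" unfolding k_def by simp
    moreover have "of_int k \<noteq> s*N" using sn unfolding k_def N_def by (metis Ints_of_int)
    ultimately show ?thesis by simp
  qed
  have k2: "s*N < of_int k + 1" unfolding k_def by linarith
  have k0: "0 \<le> k" using s0 N0 unfolding k_def by simp
  define U where "U = {of_int k / N <..< (of_int k + 1) / N}"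
  have oU: "open U" by (simp add: U_def)
  have sU: "s \<in> U" using k1 k2 N0 by (simp add: U_def field_simps)
  have fl: "\<lfloor>y*2^(Q+1)\<rfloor> = \<lfloor>s*2^(Q+1)\<rfloor>" if "y \<in> U" for y
  proof -
    have "of_int k < y*N" "y*N < of_int k + 1" using that N0 by (auto simp: U_def field_simps)
    then have "\<lfloor>y*N\<rfloor> = k" by (simp add: floor_eq_iff)
    then show ?thesis unfolding k_def N_def by simp
  qed
  have ypos: "0 < y" if "y \<in> U" for y
  proof -
    have "0 \<le> of_int k / N" using k0 N0 by simp
    then show ?thesis using that by (simp add: U_def)
  qed
  have conv: "x \<in> U" if "y \<in> U" "min s y \<le> x" "x \<le> max s y" for x y
    using that sU by (auto simp: U_def)
  have eq: "sblock (int Q) f y = sblock (int Q) f s + (y - s) *\<^sub>R HF Q f s" if yU: "y \<in> U" for y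
  proof (cases "s \<le> y")
    case True
    have "integral {s..y} (HF Q f) = integral {s..y} (\<lambda>_. HF Q f s)"
    proof (rule integral_cong)
      fix x assume "x \<in> {s..y}"
      then have "x \<in> U" using conv[OF yU] True by auto
      then show "HF Q f x = HF Q f s" using fl[of x] by (intro HF_cell) simp
    qed
    also have "\<dots> = (y - s) *\<^sub>R HF Q f s" using True by simp
    finally have "sblock (int Q) f y - sblock (int Q) f s = (y - s) *\<^sub>R HF Q f s"
      using integral_unique[OF sblock_diff[of s y Q f]] True s0 by simp
    then show ?thesis by (simp add: algebra_simps)
  next
    case False
    have yp: "0 \<le> y" using ypos[OF yU] by simp
    have "integral {y..s} (HF Q f) = integral {y..s} (\<lambda>_. HF Q f s)"
    proof (rule integral_cong)
      fix x assume "x \<in> {y..s}"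
      then have "x \<in> U" using conv[OF yU] False by auto
      then show "HF Q f x = HF Q f s" using fl[of x] by (intro HF_cell) simp
    qed
    also have "\<dots> = (s - y) *\<^sub>R HF Q f s" using False by simp
    finally have "sblock (int Q) f s - sblock (int Q) f y = (s - y) *\<^sub>R HF Q f s"
      using integral_unique[OF sblock_diff[of y s Q f]] False yp by simp
    then show ?thesis by (simp add: algebra_simps)
  qed
  have d: "((\<lambda>y. sblock (int Q) f s + (y - s) *\<^sub>R HF Q f s) has_vector_derivative HF Q f s) (at s)"
    by (auto intro!: derivative_eq_intros)
  show ?thesis
    by (rule has_vector_derivative_transform_within_open[OF d oU sU]) (simp add: eq)
qed

lemma block_integral_eq:
  fixes w :: "real \<Rightarrow> 'a::banach"
  assumes "0 \<le> t" "t \<le> 1"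
  shows "block_integral p v (int Q) w t = integral {0..t} (\<lambda>s. blinfun_apply (sblock p v s) (HF Q w s))"
  unfolding block_integral_def
proof (rule integral_spike)
  define S where "S = (\<lambda>k::nat. real k / 2^(Q+1)) ` {0..2^(Q+1)}"
  show "negligible S" unfolding S_def by (intro negligible_finite) auto
  fix x assume x: "x \<in> {0..t} - S"
  have "0 \<in> S" unfolding S_def by force
  then have "x \<noteq> 0" using x by blast
  then have x0: "0 < x" using x by auto
  have "1 \<in> S" unfolding S_def by (rule image_eqI[of _ _ "2^(Q+1)"]) auto
  then have "x \<noteq> 1" using x by blast
  then have x1: "x < 1" using x assms by auto
  have xn: "x * 2^(Q+1) \<notin> \<int>"
  proof
    assume "x * 2^(Q+1) \<in> \<int>"
    then obtain j where j: "x * 2^(Q+1) = of_int j" by (auto elim: Ints_cases)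
    have "0 < (of_int j :: real)" using x0 j by (metis mult_pos_pos zero_less_numeral zero_less_power)
    then have j0: "0 < j" by simp
    have "of_int j < (2::real)^(Q+1)" proof -
      have "x * 2^(Q+1) < 1 * 2^(Q+1)" using x1 by (intro mult_strict_right_mono) auto
      then show ?thesis using j by linarith
    qed
    then have "j < 2^(Q+1)" by (metis of_int_less_iff of_int_numeral of_int_power)
    then have "nat j \<le> 2^(Q+1)" by (simp add: nat_le_iff)
    then have "nat j \<in> {0..2^(Q+1)}" by auto
    moreover have "x = real (nat j) / 2^(Q+1)" using j j0 by (simp add: field_simps)
    ultimately have "x \<in> S" unfolding S_def by blast
    then show False using x by blast
  qed
  show "blinfun_apply (sblock p v x) (HF Q w x) = blinfun_apply (sblock p v x) (vector_derivative (sblock (int Q) w) (at x))"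
    using vector_derivative_at[OF HF_deriv[OF x0 xn, where f=w]] by simp
qed



lemma second_diff:
  fixes \<phi> :: "real \<Rightarrow> 'b::banach"
  assumes c: "continuous_on {a..a+2*h} \<phi>" and h: "0 \<le> h"
    and L: "\<And>x. x \<in> {a..a+h} \<Longrightarrow> norm (\<phi> x - \<phi> (x+h)) \<le> L*h"
  shows "norm (integral {a..a+h} \<phi> - integral {a+h..a+2*h} \<phi>) \<le> L*h*h"
proof -
  have sh: "integral {a+h..a+2*h} \<phi> = integral {a..a+h} (\<lambda>x. \<phi> (x+h))"
  proof -
    have "integral {(a+h)-h..(a+2*h)-h} (\<lambda>x. \<phi> (x+h)) = integral {a+h..a+2*h} \<phi>"
      by (rule integral_shift_real_ivl)
    moreover have "(a+h)-h = a" "(a+2*h)-h = a+h" by simp_all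
    ultimately show ?thesis by metis
  qed
  have c1: "continuous_on {a..a+h} \<phi>" by (rule continuous_on_subset[OF c]) (use h in auto)
  have c2: "continuous_on {a..a+h} (\<lambda>x. \<phi> (x+h))"
  proof -
    have "continuous_on {a..a+h} (\<lambda>x. x + h)" by (intro continuous_intros)
    moreover have "(\<lambda>x. x + h) ` {a..a+h} \<subseteq> {a..a+2*h}" using h by auto
    ultimately show ?thesis using continuous_on_compose2[OF c] by blast
  qed
  have "integral {a..a+h} \<phi> - integral {a+h..a+2*h} \<phi> = integral {a..a+h} (\<lambda>x. \<phi> x - \<phi> (x+h))"
    unfolding sh using c1 c2 by (intro integral_diff[symmetric] integrable_continuous_real)
  moreover have "norm (integral (cbox a (a+h)) (\<lambda>x. \<phi> x - \<phi> (x+h))) \<le> (L*h) * measure lborel (cbox a (a+h))"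
  proof (rule has_integral_bound)
    have "norm (\<phi> a - \<phi> (a+h)) \<le> L*h" using L h by simp
    then show "0 \<le> L*h" by (meson norm_ge_zero order_trans)
    show "((\<lambda>x. \<phi> x - \<phi> (x+h)) has_integral integral (cbox a (a+h)) (\<lambda>x. \<phi> x - \<phi> (x+h))) (cbox a (a+h))"
      using c1 c2 by (simp add: integrable_integral integrable_continuous_real integrable_diff)
    show "\<And>x. x \<in> cbox a (a+h) \<Longrightarrow> norm (\<phi> x - \<phi> (x+h)) \<le> L*h" using L by simp
  qed
  ultimately show ?thesis using h by simp
qed

locale setting =
  fixes V :: "real \<Rightarrow> ('a::real_normed_vector \<Rightarrow>\<^sub>L 'b::banach)" and H :: "real \<Rightarrow> 'a"
    and Q :: nat and LV BV MH :: real
  assumes Vcont: "continuous_on {0..1} V"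
    and Vlip: "\<And>a b. 0 \<le> a \<Longrightarrow> a \<le> b \<Longrightarrow> b \<le> 1 \<Longrightarrow> norm (V b - V a) \<le> LV * (b - a)"
    and Vb: "\<And>t. 0 \<le> t \<Longrightarrow> t \<le> 1 \<Longrightarrow> norm (V t) \<le> BV"
    and Hb: "\<And>s. norm (H s) \<le> MH"
    and Hcell: "\<And>s s'. \<lfloor>s*2^(Q+1)\<rfloor> = \<lfloor>s'*2^(Q+1)\<rfloor> \<Longrightarrow> H s = H s'"
    and LV0: "0 \<le> LV"
begin

definition g where "g s = blinfun_apply (V s) (H s)"

lemma BV0: "0 \<le> BV"
proof -
  have "norm (V 0) \<le> BV" using Vb by simp
  then show ?thesis by (meson norm_ge_zero order_trans)
qed
lemma MH0: "0 \<le> MH"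
proof -
  have "norm (H 0) \<le> MH" using Hb by simp
  then show ?thesis by (meson norm_ge_zero order_trans)
qed

lemma phi_cont: "continuous_on S (\<lambda>s. blinfun_apply (V s) c)" if "S \<subseteq> {0..1}"
proof -
  have "continuous_on S V" using Vcont that by (rule continuous_on_subset)
  then show ?thesis
    by (intro bounded_bilinear.continuous_on[OF bounded_bilinear_blinfun_apply] continuous_intros)
qed

lemma phi_lip: "0 \<le> a \<Longrightarrow> a \<le> b \<Longrightarrow> b \<le> 1 \<Longrightarrow>
   norm (blinfun_apply (V b) c - blinfun_apply (V a) c) \<le> LV * norm c * (b - a)"
proof -
  assume ab: "0 \<le> a" "a \<le> b" "b \<le> 1"
  have "norm (blinfun_apply (V b) c - blinfun_apply (V a) c) = norm (blinfun_apply (V b - V a) c)"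
    by (simp add: blinfun.diff_left)
  also have "\<dots> \<le> norm (V b - V a) * norm c" by (rule norm_blinfun)
  also have "\<dots> \<le> LV * (b - a) * norm c" using Vlip[OF ab] by (intro mult_right_mono) auto
  finally show ?thesis by (simp add: algebra_simps)
qed

lemma cell_floor:
  fixes j :: int
  assumes "of_int j / 2^(Q+1) \<le> s" "s < (of_int j + 1) / 2^(Q+1)"
  shows "\<lfloor>s*2^(Q+1)\<rfloor> = j"
  using assms by (simp add: floor_eq_iff field_simps)

lemma H_cell:
  fixes j :: int
  assumes "of_int j / 2^(Q+1) \<le> s" "s < (of_int j + 1) / 2^(Q+1)"
  shows "H s = H (of_int j / 2^(Q+1))"
proof (rule Hcell)
  have "\<lfloor>(of_int j / 2^(Q+1)) * (2::real)^(Q+1)\<rfloor> = j" by simp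
  then show "\<lfloor>s * 2 ^ (Q + 1)\<rfloor> = \<lfloor>of_int j / 2 ^ (Q + 1) * 2 ^ (Q + 1)\<rfloor>"
    using cell_floor[OF assms] by simp
qed

lemma g_cell:
  fixes j :: int
  assumes "0 \<le> a" "b \<le> 1" "of_int j / 2^(Q+1) \<le> a" "a \<le> b" "b \<le> (of_int j + 1) / 2^(Q+1)"
  shows "(g has_integral integral {a..b} (\<lambda>s. blinfun_apply (V s) (H (of_int j / 2^(Q+1))))) {a..b}"
proof -
  have "(\<lambda>s. blinfun_apply (V s) (H (of_int j / 2^(Q+1)))) integrable_on {a..b}"
    using assms by (intro integrable_continuous_real phi_cont) auto
  then have i: "((\<lambda>s. blinfun_apply (V s) (H (of_int j / 2^(Q+1)))) has_integral
      integral {a..b} (\<lambda>s. blinfun_apply (V s) (H (of_int j / 2^(Q+1))))) {a..b}"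
    by (rule integrable_integral)
  show ?thesis
  proof (rule has_integral_spike_finite[OF _ _ i, of "{b}"])
    fix x assume "x \<in> {a..b} - {b}"
    then have "of_int j / 2^(Q+1) \<le> x" "x < (of_int j + 1) / 2^(Q+1)" using assms by auto
    then show "g x = blinfun_apply (V x) (H (of_int j / 2^(Q+1)))" unfolding g_def using H_cell by simp
  qed auto
qed

lemma g_int01: "g integrable_on {0..1}"
proof -
  have "g integrable_on {0..real k / 2^(Q+1)}" if "k \<le> 2^(Q+1)" for k
    using that
  proof (induction k)
    case 0
    then show ?case using integrable_on_refl[of g 0] by simp
  next
    case (Suc k)
    have "real (Suc k) \<le> 2^(Q+1)" using Suc.prems by (metis of_nat_le_iff of_nat_numeral of_nat_power)
    then have k1: "(real k + 1) / 2^(Q+1) \<le> 1" by (simp add: divide_simps)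
    have "g integrable_on {real k / 2^(Q+1)..(real k + 1) / 2^(Q+1)}"
      using g_cell[of "real k / 2^(Q+1)" "(real k + 1) / 2^(Q+1)" "int k"] k1 by (auto simp: divide_simps)
    moreover have "g integrable_on {0..real k / 2^(Q+1)}" using Suc by simp
    ultimately have "g integrable_on {0..(real k + 1) / 2^(Q+1)}"
      by (intro Henstock_Kurzweil_Integration.integrable_combine[of 0 "real k / 2^(Q+1)" "(real k + 1) / 2^(Q+1)"]) (auto simp: divide_simps)
    then show ?case by (simp add: add.commute)
  qed
  from this[of "2^(Q+1)"] show ?thesis by simp
qed

lemma g_int: "0 \<le> a \<Longrightarrow> b \<le> 1 \<Longrightarrow> g integrable_on {a..b}"
  by (rule integrable_subinterval_real[OF g_int01]) auto

lemma g_split: "0 \<le> a \<Longrightarrow> a \<le> b \<Longrightarrow> b \<le> c \<Longrightarrow> c \<le> 1 \<Longrightarrow>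
    integral {a..b} g + integral {b..c} g = integral {a..c} g"
  by (rule Henstock_Kurzweil_Integration.integral_combine) (auto intro: g_int)

lemma E1: assumes "0 \<le> a" "a \<le> b" "b \<le> 1"
  shows "norm (integral {a..b} g) \<le> BV * MH * (b - a)"
proof -
  have i: "(g has_integral integral {a..b} g) (cbox a b)"
    using g_int[of a b] assms by (simp add: integrable_integral)
  have "norm (integral {a..b} g) \<le> (BV * MH) * measure lborel (cbox a b)"
  proof (rule has_integral_bound[OF _ i])
    show "0 \<le> BV * MH" using BV0 MH0 by simp
    fix x assume "x \<in> cbox a b"
    then have "norm (V x) \<le> BV" using assms by (intro Vb) auto
    then have "norm (V x) * norm (H x) \<le> BV * MH" using Hb[of x] BV0 by (intro mult_mono) auto
    then show "norm (g x) \<le> BV * MH" unfolding g_def using norm_blinfun order_trans by blast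
  qed
  then show ?thesis using assms by simp
qed

lemma E3:
  fixes j :: int
  assumes "0 \<le> a" "a + 2*h \<le> 1" "0 \<le> h" "of_int j / 2^(Q+1) \<le> a" "a + 2*h \<le> (of_int j + 1) / 2^(Q+1)"
  shows "norm (integral {a..a+h} g - integral {a+h..a+2*h} g) \<le> LV * MH * h * h"
proof -
  define c where "c = H (of_int j / 2^(Q+1))"
  define \<phi> where "\<phi> s = blinfun_apply (V s) c" for s
  have e1: "integral {a..a+h} g = integral {a..a+h} \<phi>"
    using integral_unique[OF g_cell[of a "a+h" j]] assms unfolding \<phi>_def c_def by auto
  have e2: "integral {a+h..a+2*h} g = integral {a+h..a+2*h} \<phi>"
    using integral_unique[OF g_cell[of "a+h" "a+2*h" j]] assms unfolding \<phi>_def c_def by auto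
  have "norm (integral {a..a+h} \<phi> - integral {a+h..a+2*h} \<phi>) \<le> (LV * norm c) * h * h"
  proof (rule second_diff)
    show "continuous_on {a..a + 2 * h} \<phi>" unfolding \<phi>_def using assms by (intro phi_cont) auto
    show "0 \<le> h" by fact
    fix x assume "x \<in> {a..a+h}"
    then have "norm (\<phi> (x+h) - \<phi> x) \<le> LV * norm c * (x + h - x)"
      unfolding \<phi>_def using assms by (intro phi_lip) auto
    then show "norm (\<phi> x - \<phi> (x+h)) \<le> LV * norm c * h" by (simp add: norm_minus_commute)
  qed
  also have "\<dots> \<le> (LV * MH) * h * h"
    using Hb[of "of_int j / 2^(Q+1)"] LV0 assms(3) unfolding c_def
    by (intro mult_right_mono mult_left_mono) auto
  finally show ?thesis using e1 e2 by simp
qed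

lemma E4loc:
  assumes "0 \<le> a" "a + 2*h \<le> 1" "0 \<le> h"
    and c1: "\<And>s. a \<le> s \<Longrightarrow> s < a + h \<Longrightarrow> H s = c"
    and c2: "\<And>s. a + h \<le> s \<Longrightarrow> s < a + 2*h \<Longrightarrow> H s = - c"
  shows "norm (integral {a..a+2*h} g) \<le> LV * norm c * h * h"
proof -
  define \<phi> where "\<phi> s = blinfun_apply (V s) c" for s
  have e1: "integral {a..a+h} g = integral {a..a+h} \<phi>"
  proof (rule integral_spike[of "{a+h}"])
    fix x assume "x \<in> {a..a+h} - {a+h}" then show "\<phi> x = g x" using c1 unfolding g_def \<phi>_def by auto
  qed auto
  have e2: "integral {a+h..a+2*h} g = integral {a+h..a+2*h} (\<lambda>s. - \<phi> s)"
  proof (rule integral_spike[of "{a+2*h}"])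
    fix x assume "x \<in> {a+h..a+2*h} - {a+2*h}" then show "- \<phi> x = g x"
      using c2 unfolding g_def \<phi>_def by (auto simp: blinfun.minus_right)
  qed auto
  have "integral {a..a+2*h} g = integral {a..a+h} g + integral {a+h..a+2*h} g"
    using assms by (intro g_split[symmetric]) auto
  also have "\<dots> = integral {a..a+h} \<phi> - integral {a+h..a+2*h} \<phi>" using e1 e2 by (simp add: integral_neg)
  finally have e: "integral {a..a+2*h} g = integral {a..a+h} \<phi> - integral {a+h..a+2*h} \<phi>" .
  have "norm (integral {a..a+h} \<phi> - integral {a+h..a+2*h} \<phi>) \<le> (LV * norm c) * h * h"
  proof (rule second_diff)
    show "continuous_on {a..a + 2 * h} \<phi>" unfolding \<phi>_def using assms by (intro phi_cont) auto
    show "0 \<le> h" by fact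
    fix x assume "x \<in> {a..a+h}"
    then have "norm (\<phi> (x+h) - \<phi> x) \<le> LV * norm c * (x + h - x)"
      unfolding \<phi>_def using assms by (intro phi_lip) auto
    then show "norm (\<phi> x - \<phi> (x+h)) \<le> LV * norm c * h" by (simp add: norm_minus_commute)
  qed
  then show ?thesis using e by simp
qed

lemma E4:
  assumes halves: "\<And>k. k \<in> {1..2^Q} \<Longrightarrow> \<exists>c. norm c \<le> K \<and>
        (\<forall>s. tL Q k \<le> s \<and> s < tM Q k \<longrightarrow> H s = c) \<and> (\<forall>s. tM Q k \<le> s \<and> s < tR Q k \<longrightarrow> H s = - c)"
    and jl: "j \<le> l" "l \<le> 2^Q"
  shows "norm (integral {real j / 2^Q .. real l / 2^Q} g) \<le> real (l - j) * (LV * K * (1/2^(Q+1)) * (1/2^(Q+1)))"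
  using jl
proof (induction l)
  case 0
  then show ?case by simp
next
  case (Suc l)
  show ?case
  proof (cases "j = Suc l")
    case True then show ?thesis by simp
  next
    case False
    then have jl': "j \<le> l" using Suc.prems by simp
    define h :: real where "h = 1/2^(Q+1)"
    have h0: "0 \<le> h" by (simp add: h_def)
    have rl: "real (Suc l) \<le> 2^Q" using Suc.prems by (metis of_nat_le_iff of_nat_numeral of_nat_power)
    obtain c where c: "norm c \<le> K" "\<forall>s. tL Q (Suc l) \<le> s \<and> s < tM Q (Suc l) \<longrightarrow> H s = c"
      "\<forall>s. tM Q (Suc l) \<le> s \<and> s < tR Q (Suc l) \<longrightarrow> H s = - c"
      using halves[of "Suc l"] Suc.prems by auto
    have tl: "tL Q (Suc l) = real l / 2^Q" by (simp add: tL_def)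
    have tm: "tM Q (Suc l) = real l / 2^Q + h" by (simp add: tM_def h_def field_simps)
    have tr: "tR Q (Suc l) = real l / 2^Q + 2*h" by (simp add: tR_def h_def field_simps)
    have lr: "real l / 2^Q + 2*h \<le> 1" using rl by (simp add: h_def field_simps)
    have loc: "norm (integral {real l / 2^Q .. real l / 2^Q + 2*h} g) \<le> LV * norm c * h * h"
      by (rule E4loc) (use c tl tm tr lr h0 in auto)
    also have "\<dots> \<le> LV * K * h * h" using c(1) LV0 h0 by (intro mult_right_mono mult_left_mono) auto
    finally have loc': "norm (integral {real l / 2^Q .. real (Suc l) / 2^Q} g) \<le> LV * K * h * h"
      using tr by (simp add: tR_def)
    have "integral {real j / 2^Q .. real (Suc l) / 2^Q} g =
        integral {real j / 2^Q .. real l / 2^Q} g + integral {real l / 2^Q .. real (Suc l) / 2^Q} g"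
      using jl' rl by (intro g_split[symmetric]) (auto simp: divide_simps)
    then have nrm: "norm (integral {real j / 2^Q .. real (Suc l) / 2^Q} g) \<le>
        norm (integral {real j / 2^Q .. real l / 2^Q} g) + norm (integral {real l / 2^Q .. real (Suc l) / 2^Q} g)"
      by (simp add: norm_triangle_ineq)
    moreover have "norm (integral {real j / 2^Q .. real l / 2^Q} g) \<le> real (l - j) * (LV * K * h * h)"
      using Suc.IH[OF jl'] Suc.prems unfolding h_def by simp
    ultimately have "norm (integral {real j / 2^Q .. real (Suc l) / 2^Q} g) \<le>
        real (l - j) * (LV * K * h * h) + LV * K * h * h"
      using loc' nrm by linarith
    also have "\<dots> = real (Suc l - j) * (LV * K * h * h)" using jl' by (simp add: Suc_diff_le algebra_simps)
    finally show ?thesis unfolding h_def .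
  qed
qed

end



lemma t_in01:
  assumes "m \<in> {1..2^I}"
  shows "0 \<le> tL I m" "tL I m \<le> tM I m" "tM I m \<le> tR I m" "tR I m \<le> 1"
proof -
  have "real m \<le> 2^I" using assms by (metis atLeastAtMost_iff of_nat_le_iff of_nat_numeral of_nat_power)
  then show "tR I m \<le> 1" by (simp add: tR_def divide_simps)
  show "0 \<le> tL I m" using assms by (simp add: tL_def)
  show "tL I m \<le> tM I m" "tM I m \<le> tR I m" using tLM tMR less_imp_le by blast+
qed

context setting
begin

definition G where "G t = integral {0..t} g"

lemma scoeff_G:
  assumes "m \<in> {1..2^I}"
  shows "scoeff G I m = integral {tL I m..tM I m} g - integral {tM I m..tR I m} g"
proof -
  note t = t_in01[OF assms]
  have "G (tM I m) = G (tL I m) + integral {tL I m..tM I m} g"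
    unfolding G_def using t by (intro g_split[symmetric]) auto
  moreover have "G (tR I m) = G (tM I m) + integral {tM I m..tR I m} g"
    unfolding G_def using t by (intro g_split[symmetric]) auto
  ultimately show ?thesis using assms by (simp add: scoeff_def algebra_simps scaleR_2)
qed

lemma scoeff_G00: "scoeff G 0 0 = integral {0..1} g"
  by (simp add: scoeff_def G_def)

lemma coefE1:
  assumes "m \<in> {0..2^I}"
  shows "norm (scoeff G I m) \<le> BV * MH * (1/2^I)"
proof (cases "m = 0")
  case True
  show ?thesis
  proof (cases "I = 0")
    case True
    then show ?thesis using \<open>m = 0\<close> E1[of 0 1] by (simp add: scoeff_G00)
  next
    case False
    then show ?thesis using \<open>m = 0\<close> BV0 MH0 by (simp add: scoeff_def)
  qed
next
  case False
  then have m: "m \<in> {1..2^I}" using assms by auto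
  note t = t_in01[OF m]
  have "norm (scoeff G I m) \<le> norm (integral {tL I m..tM I m} g) + norm (integral {tM I m..tR I m} g)"
    unfolding scoeff_G[OF m] by (rule norm_triangle_ineq4)
  also have "\<dots> \<le> BV * MH * (tM I m - tL I m) + BV * MH * (tR I m - tM I m)"
    using t by (intro add_mono E1) auto
  also have "\<dots> = BV * MH * (1/2^I)"
    by (simp add: tM_mid algebra_simps flip: distrib_left)
  finally show ?thesis .
qed

lemma coefE3:
  assumes "m \<in> {1..2^I}" "Q < I"
  shows "norm (scoeff G I m) \<le> LV * MH * (1/2^(I+1)) * (1/2^(I+1))"
proof -
  define d where "d = I - Q - 1"
  have Id: "I = Q + 1 + d" using assms(2) by (simp add: d_def)
  define j where "j = (m - 1) div 2^d"
  have j1: "j * 2^d \<le> m - 1" unfolding j_def using div_mult_mod_eq[of "m-1" "2^d"] by linarith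
  have j2: "m \<le> (j + 1) * 2^d"
  proof -
    have "m - 1 < (j + 1) * 2^d" unfolding j_def
      by (metis div_mult_mod_eq mod_less_divisor zero_less_numeral zero_less_power add.commute
          add_less_cancel_left distrib_right mult_1)
    then show ?thesis by linarith
  qed
  have r1: "real j * 2^d \<le> real m - 1"
  proof -
    have "real (j * 2^d) \<le> real (m - 1)" using j1 by (simp only: of_nat_le_iff)
    then show ?thesis using assms(1) by (simp add: of_nat_diff)
  qed
  have r2: "real m \<le> (real j + 1) * 2^d"
  proof -
    have "real m \<le> real ((j + 1) * 2^d)" using j2 by (simp only: of_nat_le_iff)
    then show ?thesis by (simp add: algebra_simps)
  qed
  define h :: real where "h = 1/2^(I+1)"
  have e: "tM I m = tL I m + h" "tR I m = tL I m + 2*h"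
    by (simp_all add: tL_def tM_def tR_def h_def field_simps)
  have c1: "of_int (int j) / 2^(Q+1) \<le> tL I m"
  proof -
    have "real j * 2^d / 2^(Q+1+d) \<le> (real m - 1) / 2^(Q+1+d)"
      using r1 by (simp add: divide_right_mono)
    then show ?thesis unfolding tL_def Id by (simp add: power_add)
  qed
  have c2: "tL I m + 2*h \<le> (of_int (int j) + 1) / 2^(Q+1)"
  proof -
    have "real m / 2^(Q+1+d) \<le> (real j + 1) * 2^d / 2^(Q+1+d)"
      using r2 by (simp add: divide_right_mono)
    then show ?thesis using e unfolding tR_def[symmetric] Id by (simp add: power_add tR_def)
  qed
  note t = t_in01[OF assms(1)]
  have "norm (integral {tL I m..tL I m + h} g - integral {tL I m + h..tL I m + 2*h} g) \<le> LV * MH * h * h"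
    by (rule E3[OF _ _ _ c1 c2]) (use t e in \<open>auto simp: h_def\<close>)
  then show ?thesis unfolding scoeff_G[OF assms(1)] e h_def .
qed

lemma coefE4:
  assumes halves: "\<And>k. k \<in> {1..2^Q} \<Longrightarrow> \<exists>c. norm c \<le> K \<and>
        (\<forall>s. tL Q k \<le> s \<and> s < tM Q k \<longrightarrow> H s = c) \<and> (\<forall>s. tM Q k \<le> s \<and> s < tR Q k \<longrightarrow> H s = - c)"
    and m: "m \<in> {0..2^I}" and IQ: "I < Q"
  shows "norm (scoeff G I m) \<le> 2^(Q - I) * (LV * K * (1/2^(Q+1)) * (1/2^(Q+1)))"
proof -
  define X where "X = LV * K * (1/2^(Q+1)) * (1/2^(Q+1))"
  show ?thesis
  proof (cases "m = 0")
    case True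
    show ?thesis
    proof (cases "I = 0")
      case True
      have "norm (integral {real 0 / 2^Q .. real (2^Q) / 2^Q} g) \<le> real (2^Q - 0) * X"
        unfolding X_def by (rule E4[OF halves]) auto
      then show ?thesis using \<open>m = 0\<close> True by (simp add: scoeff_G00 X_def)
    next
      case False
      have "0 \<le> X"
      proof -
        have "norm (integral {real 0 / 2^Q .. real 1 / 2^Q} g) \<le> real (1 - 0) * X"
          unfolding X_def by (rule E4[OF halves]) auto
        then have "norm (integral {real 0 / 2^Q .. real 1 / 2^Q} g) \<le> X" by simp
        then show ?thesis by (meson norm_ge_zero order_trans)
      qed
      then have "0 \<le> 2^(Q - I) * X" by simp
      then show ?thesis using \<open>m = 0\<close> False by (simp add: scoeff_def X_def)
    qed
  next
    case False
    then have m1: "m \<in> {1..2^I}" using m by auto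
    define d where "d = Q - I - 1"
    have Qd: "Q = I + 1 + d" using IQ by (simp add: d_def)
    have QI: "Q - I = d + 1" using IQ by (simp add: d_def)
    have mle: "m * 2^(d+1) \<le> 2^Q" using m1 unfolding Qd by (simp add: power_add)
    have a: "tL I m = real ((m - 1) * 2^(d+1)) / 2^Q"
      using m1 unfolding tL_def Qd by (simp add: power_add of_nat_diff field_simps)
    have b: "tM I m = real ((2*m - 1) * 2^d) / 2^Q"
      using m1 unfolding tM_def Qd by (simp add: power_add of_nat_diff field_simps)
    have c: "tR I m = real (m * 2^(d+1)) / 2^Q"
      unfolding tR_def Qd by (simp add: power_add field_simps)
    have n1: "norm (integral {tL I m..tM I m} g) \<le> real ((2*m - 1) * 2^d - (m - 1) * 2^(d+1)) * X"
      unfolding a b X_def using m1 mle by (intro E4[OF halves]) (auto simp: power_add algebra_simps diff_mult_distrib)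
    have n2: "norm (integral {tM I m..tR I m} g) \<le> real (m * 2^(d+1) - (2*m - 1) * 2^d) * X"
      unfolding b c X_def using m1 mle by (intro E4[OF halves]) (auto simp: power_add algebra_simps diff_mult_distrib)
    have d1: "(2*m - 1) * 2^d - (m - 1) * 2^(d+1) = 2^d"
      using m1 by (simp add: power_add diff_mult_distrib algebra_simps)
    have d2: "m * 2^(d+1) - (2*m - 1) * 2^d = (2::nat)^d"
      using m1 by (simp add: power_add diff_mult_distrib algebra_simps)
    have "norm (scoeff G I m) \<le> norm (integral {tL I m..tM I m} g) + norm (integral {tM I m..tR I m} g)"
      unfolding scoeff_G[OF m1] by (rule norm_triangle_ineq4)
    also have "\<dots> \<le> 2^d * X + 2^d * X"
    proof -
      have n1': "norm (integral {tL I m..tM I m} g) \<le> 2^d * X" using n1 unfolding d1 by simp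
      have n2': "norm (integral {tM I m..tR I m} g) \<le> 2^d * X" using n2 unfolding d2 by simp
      show ?thesis using n1' n2' by linarith
    qed
    also have "\<dots> = 2^(Q - I) * X" unfolding QI by simp
    finally show ?thesis unfolding X_def .
  qed
qed

end



lemma supnorm_le:
  assumes "\<And>t. t \<in> {0..1} \<Longrightarrow> norm (f t) \<le> B"
  shows "supnorm f \<le> B"
  unfolding supnorm_def by (rule cSUP_least) (use assms in auto)

lemma supnorm_ge:
  assumes "\<And>t. t \<in> {0..1} \<Longrightarrow> norm (f t) \<le> B" "t \<in> {0..1}"
  shows "norm (f t) \<le> supnorm f"
  unfolding supnorm_def by (rule cSUP_upper) (use assms in \<open>auto intro!: bdd_aboveI2[where M=B]\<close>)

lemma supnorm_nonneg:
  assumes "\<And>t. t \<in> {0..1} \<Longrightarrow> norm (f t) \<le> B"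
  shows "0 \<le> supnorm f"
proof -
  have "norm (f 0) \<le> supnorm f" using supnorm_ge[OF assms, where t=0] by simp
  then show ?thesis by (meson norm_ge_zero order_trans)
qed

lemma sblock_sup:
  fixes F :: "real \<Rightarrow> 'e::real_normed_vector"
  assumes B: "\<And>m. m \<in> {0..2^I} \<Longrightarrow> norm (scoeff F I m) \<le> B"
  shows "supnorm (sblock (int I) F) \<le> 2 * B"
proof (rule supnorm_le)
  have B0: "0 \<le> B"
  proof -
    have "norm (scoeff F I 0) \<le> B" using B by simp
    then show ?thesis by (meson norm_ge_zero order_trans)
  qed
  fix t :: real assume t: "t \<in> {0..1}"
  show "norm (sblock (int I) F t) \<le> 2 * B"
  proof (cases "I = 0")
    case True
    have "norm (sblock 0 F t) \<le> \<bar>schauder 0 0 t\<bar> * norm (scoeff F 0 0) + \<bar>schauder 0 1 t\<bar> * norm (scoeff F 0 1)"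
      unfolding sblock0_eq by (metis norm_scaleR norm_triangle_ineq)
    also have "\<dots> \<le> 1 * B + (1/2) * B"
      using t B[of 0] B[of 1] True schauder_bound[of 1 0 t] B0
      by (intro add_mono mult_mono) (auto simp: schauder_0)
    finally show ?thesis using True B0 by simp
  next
    case False
    define m0 where "m0 = nat \<lfloor>t * 2^I\<rfloor> + 1"
    have "sblock (int I) F t = schauder I 0 t *\<^sub>R scoeff F I 0 +
        (if m0 \<in> {0..2^I} then schauder I m0 t *\<^sub>R scoeff F I m0 else 0)"
      unfolding sblock_nat
    proof (rule sum_single)
      fix m assume "m \<in> {0..2^I}" "m \<noteq> 0" "m \<noteq> m0"
      then show "schauder I m t *\<^sub>R scoeff F I m = 0"
        using tent_single[where t=t and m=m and P=I] schauder_out[where m=m and p=I and t=t]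
        unfolding m0_def by auto
    qed (auto simp: m0_def)
    then have e: "sblock (int I) F t = (if m0 \<in> {0..2^I} then schauder I m0 t *\<^sub>R scoeff F I m0 else 0)"
      using False by (simp add: scoeff_0)
    show ?thesis
    proof (cases "m0 \<in> {0..2^I}")
      case True
      then have "norm (sblock (int I) F t) = \<bar>schauder I m0 t\<bar> * norm (scoeff F I m0)" using e by simp
      also have "\<dots> \<le> (1/2) * B"
        using schauder_bound[of m0 I t] B[OF True] B0 by (intro mult_mono) (auto simp: m0_def)
      finally show ?thesis using B0 by simp
    next
      case False
      then show ?thesis using e B0 by simp
    qed
  qed
qed

lemma HF_halves:
  assumes Q: "Q \<ge> 1" and k: "k \<in> {1..2^Q}"
  shows "\<forall>s. tL Q k \<le> s \<and> s < tM Q k \<longrightarrow> HF Q f s = (2^Q) *\<^sub>R scoeff f Q k"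
    and "\<forall>s. tM Q k \<le> s \<and> s < tR Q k \<longrightarrow> HF Q f s = - ((2^Q) *\<^sub>R scoeff f Q k)"
proof -
  have single: "HF Q f s = haar Q k s *\<^sub>R scoeff f Q k" if s: "tL Q k \<le> s" "s < tR Q k" for s
  proof -
    have "HF Q f s = haar Q 0 s *\<^sub>R scoeff f Q 0 +
        (if k \<in> {0..2^Q} then haar Q k s *\<^sub>R scoeff f Q k else 0)"
      unfolding HF_def
    proof (rule sum_single)
      fix m assume m: "m \<in> {0..2^Q}" "m \<noteq> 0" "m \<noteq> k"
      have "s < tL Q m \<or> tR Q m \<le> s"
      proof (cases "m < k")
        case True
        then have "real m \<le> real k - 1" by linarith
        then have "tR Q m \<le> tL Q k" by (simp add: tR_def tL_def divide_simps)
        then show ?thesis using s by auto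
      next
        case False
        then have "real m \<ge> real k + 1" using m by linarith
        then have "tR Q k \<le> tL Q m" by (simp add: tR_def tL_def divide_simps)
        then show ?thesis using s by auto
      qed
      then show "haar Q m s *\<^sub>R scoeff f Q m = 0" using haar_out[where m=m and p=Q and s=s] m by auto
    qed (use k in auto)
    then show ?thesis using k Q by (simp add: scoeff_0)
  qed
  show "\<forall>s. tL Q k \<le> s \<and> s < tM Q k \<longrightarrow> HF Q f s = (2^Q) *\<^sub>R scoeff f Q k"
    using single tMR[of Q k] k by (auto simp: haar_def)
  show "\<forall>s. tM Q k \<le> s \<and> s < tR Q k \<longrightarrow> HF Q f s = - ((2^Q) *\<^sub>R scoeff f Q k)"
    using single tLM[of Q k] k by (auto simp: haar_def)
qed

lemma scoeff_transfer:
  assumes "\<And>t. t \<in> {0..1} \<Longrightarrow> F t = G t" "m \<in> {0..2^I}"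
  shows "scoeff F I m = scoeff G I m"
proof (cases "m = 0")
  case True then show ?thesis using assms(1)[of 0] assms(1)[of 1] by (simp add: scoeff_def)
next
  case False
  then have "m \<in> {1..2^I}" using assms by auto
  note t = t_in01[OF this]
  show ?thesis unfolding scoeff_def using t assms(1)[of "tL I m"] assms(1)[of "tM I m"] assms(1)[of "tR I m"] False
    by auto
qed



lemma int_cases_m1:
  fixes p :: int
  assumes "p \<ge> -1"
  obtains "p = -1" | P where "p = int P"
proof (cases "p = -1")
  case True then show ?thesis by (rule that(1))
next
  case False then have "p \<ge> 0" using assms by simp
  then have "p = int (nat p)" by simp
  then show ?thesis by (rule that(2))
qed

lemma sblock_bounded:
  assumes "p \<ge> -1"
  shows "\<exists>B. \<forall>t\<in>{0..1}. norm (sblock p f t) \<le> B"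
  using assms
proof (cases rule: int_cases_m1)
  case 1
  then show ?thesis by (auto simp: sblock_def)
next
  case (2 P)
  then show ?thesis using sblock_bdd[of P f] by simp
qed

lemma sblock_le_sup:
  assumes "p \<ge> -1" "t \<in> {0..1}"
  shows "norm (sblock p f t) \<le> supnorm (sblock p f)"
proof -
  obtain B where "\<forall>t\<in>{0..1}. norm (sblock p f t) \<le> B" using sblock_bounded[OF assms(1)] by blast
  then show ?thesis using assms(2) by (intro supnorm_ge[where B=B]) auto
qed

lemma sblock_sup_nonneg:
  assumes "p \<ge> -1"
  shows "0 \<le> supnorm (sblock p f)"
proof -
  have "norm (sblock p f 0) \<le> supnorm (sblock p f)" using sblock_le_sup[OF assms, where t=0] by simp
  then show ?thesis by (meson norm_ge_zero order_trans)
qed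

lemma sblock_lip_gen:
  fixes f :: "real \<Rightarrow> 'e::banach"
  assumes "p \<ge> -1" "0 \<le> a" "a \<le> b" "b \<le> 1"
  shows "norm (sblock p f b - sblock p f a) \<le> 4 * 2 powr (real_of_int p) * supnorm (sblock p f) * (b - a)"
  using assms(1)
proof (cases rule: int_cases_m1)
  case 1
  have "0 \<le> 4 * 2 powr (real_of_int p) * supnorm (sblock p f) * (b - a)"
    using sblock_sup_nonneg[OF assms(1), of f] assms by simp
  then show ?thesis using 1 by (simp add: sblock_def)
next
  case (2 P)
  have "norm (sblock (int P) f b - sblock (int P) f a) \<le> 4 * 2^P * supnorm (sblock (int P) f) * (b - a)"
    by (rule sblock_lip) (use sblock_le_sup[of "int P"] assms in auto)
  then show ?thesis using 2 by (simp add: powr_realpow)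
qed

lemma sblock_cont:
  fixes f :: "real \<Rightarrow> 'e::banach"
  assumes "p \<ge> -1"
  shows "continuous_on {0..1} (sblock p f)"
proof (rule lipschitz_on_continuous_on)
  show "(4 * 2 powr (real_of_int p) * supnorm (sblock p f))-lipschitz_on {0..1} (sblock p f)"
  proof (rule lipschitz_on_leI)
    fix x y :: real assume "x \<in> {0..1}" "y \<in> {0..1}" "x \<le> y"
    then show "dist (sblock p f x) (sblock p f y) \<le> 4 * 2 powr (real_of_int p) * supnorm (sblock p f) * dist x y"
      using sblock_lip_gen[OF assms, of x y f] by (simp add: dist_norm norm_minus_commute)
  next
    have "0 \<le> supnorm (sblock p f)" using sblock_sup_nonneg[OF assms] .
    then show "0 \<le> 4 * 2 powr (real_of_int p) * supnorm (sblock p f)" by (intro mult_nonneg_nonneg) auto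
  qed
qed

lemma ar1: "BV * (4 * 2^Q * BW) * (1/2^I) = 4 * 2 powr (real Q - real I) * BV * BW"
  by (simp add: powr_diff powr_realpow)

lemma ar3: "(4 * 2 powr x * BV) * (4 * 2^Q * BW) * (1/2^(I+1)) * (1/2^(I+1)) =
   4 * 2 powr (x + real Q - real (2*I)) * BV * BW"
proof -
  have e2: "(2::real)^(2*I) = 2^I * 2^I" by (simp add: mult_2 power_add)
  have "2 powr (x + real Q - real (2*I)) = 2 powr x * 2^Q / 2^(2*I)"
    by (simp add: powr_diff powr_add powr_realpow del: of_nat_mult)
  then have "2 powr (x + real Q - real (2*I)) = 2 powr x * 2^Q / (2^I * 2^I)" by (simp only: e2)
  then show ?thesis by (simp add: field_simps)
qed

lemma ar4: "I < Q \<Longrightarrow> 2^(Q - I) * ((4 * 2 powr x * BV) * (2^Q * (2*BW)) * (1/2^(Q+1)) * (1/2^(Q+1))) =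
   2 * 2 powr (x - real I) * BV * BW"
proof -
  assume "I < Q"
  then have Q: "Q = (Q - I) + I" by simp
  have "2 powr (x - real I) = 2 powr x / 2^I"
    by (simp add: powr_diff powr_realpow)
  moreover have "(2::real)^Q = 2^(Q-I) * 2^I" by (subst Q) (simp add: power_add)
  ultimately show ?thesis by (simp add: power_add field_simps)
qed



lemma main_fixed:
  fixes v :: "real \<Rightarrow> ('a::banach \<Rightarrow>\<^sub>L 'b::banach)" and w :: "real \<Rightarrow> 'a"
  assumes i: "i \<ge> -1" and p: "p \<ge> -1" and q: "q \<ge> 0"
  shows "supnorm (sblock i (block_integral p v q w)) \<le>
       (if i = q \<and> q > p then 8 * supnorm (sblock p v) * supnorm (sblock q w)
        else 8 * 2 powr (real_of_int (- max i (max p q) - i + p + q))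
               * supnorm (sblock p v) * supnorm (sblock q w))"
proof -
  obtain Q where qQ: "q = int Q" using q by (metis nonneg_int_cases)
  define BV where "BV = supnorm (sblock p v)"
  define BW where "BW = supnorm (sblock q w)"
  define LV where "LV = 4 * 2 powr (real_of_int p) * BV"
  define MH :: real where "MH = 4 * 2^Q * BW"
  define R where "R = (if i = q \<and> q > p then 8 * BV * BW
        else 8 * 2 powr (real_of_int (- max i (max p q) - i + p + q)) * BV * BW)"
  have BV0: "0 \<le> BV" unfolding BV_def using sblock_sup_nonneg[OF p] .
  have BW0: "0 \<le> BW" unfolding BW_def using sblock_sup_nonneg[of q] q by simp
  have R0: "0 \<le> R" unfolding R_def using BV0 BW0 by auto
  have Wb: "\<And>t. t \<in> {0..1} \<Longrightarrow> norm (sblock (int Q) w t) \<le> BW"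
    unfolding BW_def qQ by (rule sblock_le_sup) auto
  interpret S: setting "sblock p v" "HF Q w" Q LV BV MH
  proof
    show "continuous_on {0..1} (sblock p v)" by (rule sblock_cont[OF p])
    show "\<And>a b. 0 \<le> a \<Longrightarrow> a \<le> b \<Longrightarrow> b \<le> 1 \<Longrightarrow> norm (sblock p v b - sblock p v a) \<le> LV * (b - a)"
      unfolding LV_def BV_def by (rule sblock_lip_gen[OF p])
    show "\<And>t. 0 \<le> t \<Longrightarrow> t \<le> 1 \<Longrightarrow> norm (sblock p v t) \<le> BV"
      unfolding BV_def using sblock_le_sup[OF p] by auto
    show "\<And>s. norm (HF Q w s) \<le> MH" unfolding MH_def by (rule HF_bound[OF Wb])
    show "\<And>s s'. \<lfloor>s * 2 ^ (Q + 1)\<rfloor> = \<lfloor>s' * 2 ^ (Q + 1)\<rfloor> \<Longrightarrow> HF Q w s = HF Q w s'"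
      by (rule HF_cell)
    show "0 \<le> LV" unfolding LV_def using BV0 by simp
  qed
  have FG: "block_integral p v q w t = S.G t" if "t \<in> {0..1}" for t
    unfolding S.G_def S.g_def qQ using that by (intro block_integral_eq) auto
  have "supnorm (sblock i (block_integral p v q w)) \<le> R"
    using i
  proof (cases rule: int_cases_m1)
    case 1
    have "supnorm (sblock i (block_integral p v q w)) \<le> 0"
    proof (rule supnorm_le)
      fix t :: real assume "t \<in> {0..1}"
      have "block_integral p v q w 0 = 0" using FG[of 0] by (simp add: S.G_def)
      then show "norm (sblock i (block_integral p v q w) t) \<le> 0" using 1 by (simp add: sblock_def)
    qed
    then show ?thesis using R0 by simp
  next
    case (2 I)
    have coef: "norm (scoeff (block_integral p v q w) I m) \<le> R / 2" if m: "m \<in> {0..2^I}" for m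
    proof -
      have tr: "scoeff (block_integral p v q w) I m = scoeff S.G I m"
        by (rule scoeff_transfer[OF FG m])
      show ?thesis
      proof (cases "Q < I \<and> p < int I")
        case True
        show ?thesis
        proof (cases "m = 0")
          case True
          then show ?thesis using \<open>Q < I \<and> p < int I\<close> R0 tr by (simp add: scoeff_def)
        next
          case False
          then have m1: "m \<in> {1..2^I}" using m by auto
          have "norm (scoeff S.G I m) \<le> LV * MH * (1/2^(I+1)) * (1/2^(I+1))"
            using S.coefE3[OF m1] \<open>Q < I \<and> p < int I\<close> by simp
          also have "\<dots> = 4 * 2 powr (real_of_int p + real Q - real (2*I)) * BV * BW"
            unfolding LV_def MH_def by (rule ar3)
          also have "\<dots> = R / 2"
          proof -
            have mx: "max i (max p q) = i" using 2 qQ \<open>Q < I \<and> p < int I\<close> by auto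
            have nexc: "\<not> (i = q \<and> q > p)" using 2 qQ \<open>Q < I \<and> p < int I\<close> by auto
            have e: "real_of_int (- max i (max p q) - i + p + q) = real_of_int p + real Q - real (2*I)"
              using mx 2 qQ by simp
            have "R = 8 * 2 powr (real_of_int (- max i (max p q) - i + p + q)) * BV * BW"
              unfolding R_def by (rule if_not_P[OF nexc])
            also have "\<dots> = 8 * 2 powr (real_of_int p + real Q - real (2*I)) * BV * BW" by (simp only: e)
            finally show ?thesis by simp
          qed
          finally show ?thesis using tr by simp
        qed
      next
        case notA: False
        show ?thesis
        proof (cases "I < Q \<and> p < int Q")
          case True
          have Q1: "Q \<ge> 1" using True by simp
          define K :: real where "K = 2^Q * (2 * BW)"
          have halves: "\<exists>c. norm c \<le> K \<and>
              (\<forall>s. tL Q k \<le> s \<and> s < tM Q k \<longrightarrow> HF Q w s = c) \<and> (\<forall>s. tM Q k \<le> s \<and> s < tR Q k \<longrightarrow> HF Q w s = - c)"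
            if k: "k \<in> {1..2^Q}" for k
          proof (intro exI conjI)
            show "norm ((2^Q) *\<^sub>R scoeff w Q k) \<le> K"
              unfolding K_def using coeff_bound(2)[OF Wb Q1 k] by simp
          qed (use HF_halves[OF Q1 k] in auto)
          have "norm (scoeff S.G I m) \<le> 2^(Q - I) * (LV * K * (1/2^(Q+1)) * (1/2^(Q+1)))"
            by (rule S.coefE4[OF halves m]) (use True in auto)
          also have "\<dots> = 2 * 2 powr (real_of_int p - real I) * BV * BW"
            unfolding LV_def K_def using True by (intro ar4) auto
          also have "\<dots> \<le> R / 2"
          proof -
            have mx: "max i (max p q) = q" using 2 qQ True by auto
            have nexc: "\<not> (i = q \<and> q > p)" using 2 qQ True by auto
            have e: "real_of_int (- max i (max p q) - i + p + q) = real_of_int p - real I"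
              using mx 2 qQ by simp
            have "R = 8 * 2 powr (real_of_int (- max i (max p q) - i + p + q)) * BV * BW"
              unfolding R_def by (rule if_not_P[OF nexc])
            also have "\<dots> = 8 * 2 powr (real_of_int p - real I) * BV * BW" by (simp only: e)
            finally have "R / 2 = 4 * 2 powr (real_of_int p - real I) * BV * BW" by simp
            moreover have "0 \<le> 2 powr (real_of_int p - real I) * BV * BW" using BV0 BW0 by simp
            ultimately show ?thesis by linarith
          qed
          finally show ?thesis using tr by simp
        next
          case notB: False
          have "norm (scoeff S.G I m) \<le> BV * MH * (1/2^I)" by (rule S.coefE1[OF m])
          also have "\<dots> = 4 * 2 powr (real Q - real I) * BV * BW" unfolding MH_def by (rule ar1)
          also have "\<dots> = R / 2"
          proof (cases "i = q \<and> q > p")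
            case True
            then have "Q = I" using 2 qQ by simp
            then show ?thesis using True unfolding R_def by simp
          next
            case False
            have "max i (max p q) = p" using 2 qQ notA notB False by auto
            then show ?thesis using False unfolding R_def using 2 qQ by simp
          qed
          finally show ?thesis using tr by simp
        qed
      qed
    qed
    have "supnorm (sblock (int I) (block_integral p v q w)) \<le> 2 * (R / 2)"
      by (rule sblock_sup) (use coef in auto)
    then show ?thesis using 2 by simp
  qed
  then show ?thesis unfolding R_def BV_def BW_def .
qed


theorem mainTheorem5:
  "\<exists>C::real. \<forall>(i::int) (p::int) (q::int)
      (v :: real \<Rightarrow> ((real ^ 'd) \<Rightarrow>\<^sub>L (real ^ 'n))) (w :: real \<Rightarrow> real ^ 'd).
     i \<ge> -1 \<and> p \<ge> -1 \<and> q \<ge> 0 \<and> continuous_on {0..1} v \<and> continuous_on {0..1} w \<longrightarrow>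
     supnorm (sblock i (block_integral p v q w)) \<le>
       (if i = q \<and> q > p then C * supnorm (sblock p v) * supnorm (sblock q w)
        else C * 2 powr (real_of_int (- max i (max p q) - i + p + q))
               * supnorm (sblock p v) * supnorm (sblock q w))"
proof (rule exI[of _ 8], intro allI impI)
  fix i p q :: int and v :: "real \<Rightarrow> ((real ^ 'd) \<Rightarrow>\<^sub>L (real ^ 'n))" and w :: "real \<Rightarrow> real ^ 'd"
  assume h: "i \<ge> -1 \<and> p \<ge> -1 \<and> q \<ge> 0 \<and> continuous_on {0..1} v \<and> continuous_on {0..1} w"
  show "supnorm (sblock i (block_integral p v q w)) \<le>
       (if i = q \<and> q > p then 8 * supnorm (sblock p v) * supnorm (sblock q w)
        else 8 * 2 powr (real_of_int (- max i (max p q) - i + p + q))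
               * supnorm (sblock p v) * supnorm (sblock q w))"
    by (rule main_fixed) (use h in auto)
qed

end
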